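(* Let $M_1$ and $M_2$ be matroids on a finite set $E$ with rank functions $r_1,r_2$, and let $G$ be their mixing graph. If $A,B\in\mathscr{X}$ and $|A\triangle B|\le2$, then $G$ contains a path from $A$ to $B$.
   Context: Let $\mathscr{X}=\{A\subseteq E: r_1(A)\ne r_2(A)\}$. The mixing graph $G=G_{M_1,M_2}$ has vertex set $\mathscr{X}$, and $AB$ is an edge iff either (i) $A\subsetneq B$ or $B\subsetneq A$, or (ii) $A\cap B\notin\mathscr{X}$, $A\cup B\notin\mathscr{X}$, and $|A\triangle B|=2$. Here $\triangle$ denotes symmetric difference. *)

theory Defs
  imports Main
begin

definition matroid_rank :: "'a set \<Rightarrow> ('a set \<Rightarrow> nat) \<Rightarrow> bool" where
  "matroid_rank E r \<longleftrightarrow> finite E \<and>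
     (\<forall>A. A \<subseteq> E \<longrightarrow> r A \<le> card A) \<and>
     (\<forall>A B. A \<subseteq> B \<and> B \<subseteq> E \<longrightarrow> r A \<le> r B) \<and>
     (\<forall>A B. A \<subseteq> E \<and> B \<subseteq> E \<longrightarrow> r (A \<union> B) + r (A \<inter> B) \<le> r A + r B)"

definition mix_X :: "'a set \<Rightarrow> ('a set \<Rightarrow> nat) \<Rightarrow> ('a set \<Rightarrow> nat) \<Rightarrow> 'a set set" where
  "mix_X E r1 r2 = {A. A \<subseteq> E \<and> r1 A \<noteq> r2 A}"

definition mix_edge :: "'a set \<Rightarrow> ('a set \<Rightarrow> nat) \<Rightarrow> ('a set \<Rightarrow> nat) \<Rightarrow> 'a set \<Rightarrow> 'a set \<Rightarrow> bool" where
  "mix_edge E r1 r2 A B \<longleftrightarrow> A \<in> mix_X E r1 r2 \<and> B \<in> mix_X E r1 r2 \<and>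
     (A \<subset> B \<or> B \<subset> A \<or>
      (A \<inter> B \<notin> mix_X E r1 r2 \<and> A \<union> B \<notin> mix_X E r1 r2 \<and> card ((A - B) \<union> (B - A)) = 2))"

definition mix_path :: "'a set \<Rightarrow> ('a set \<Rightarrow> nat) \<Rightarrow> ('a set \<Rightarrow> nat) \<Rightarrow> 'a set list \<Rightarrow> 'a set \<Rightarrow> 'a set \<Rightarrow> bool" where
  "mix_path E r1 r2 P A B \<longleftrightarrow> P \<noteq> [] \<and> hd P = A \<and> last P = B \<and> distinct P \<and>
     set P \<subseteq> mix_X E r1 r2 \<and>
     (\<forall>i. Suc i < length P \<longrightarrow> mix_edge E r1 r2 (P ! i) (P ! Suc i))"

end

theory Submission
  imports Defs
begin

lemma path1: "A \<in> mix_X E r1 r2 \<Longrightarrow> mix_path E r1 r2 [A] A A"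
  by (simp add: mix_path_def)

lemma path2: "A \<noteq> B \<Longrightarrow> mix_edge E r1 r2 A B \<Longrightarrow> mix_path E r1 r2 [A, B] A B"
  unfolding mix_path_def
proof (intro conjI allI impI)
  fix i assume "A \<noteq> B" "mix_edge E r1 r2 A B" "Suc i < length [A, B]"
  thus "mix_edge E r1 r2 ([A, B] ! i) ([A, B] ! Suc i)" by simp
qed (auto simp: mix_edge_def)

lemma path3: "A \<noteq> B \<Longrightarrow> A \<noteq> C \<Longrightarrow> C \<noteq> B \<Longrightarrow> mix_edge E r1 r2 A C \<Longrightarrow>
   mix_edge E r1 r2 C B \<Longrightarrow> mix_path E r1 r2 [A, C, B] A B"
  unfolding mix_path_def
proof (intro conjI allI impI)
  fix i assume h: "mix_edge E r1 r2 A C" "mix_edge E r1 r2 C B" "Suc i < length [A, C, B]"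
  hence "i = 0 \<or> i = 1" by auto
  thus "mix_edge E r1 r2 ([A, C, B] ! i) ([A, C, B] ! Suc i)" using h by auto
qed (auto simp: mix_edge_def)

theorem lemma3p7:
  fixes E :: "'a set" and r1 r2 :: "'a set \<Rightarrow> nat" and A B :: "'a set"
  assumes "matroid_rank E r1" and "matroid_rank E r2"
    and "A \<in> mix_X E r1 r2" and "B \<in> mix_X E r1 r2"
    and "card ((A - B) \<union> (B - A)) \<le> 2"
  shows "\<exists>P. mix_path E r1 r2 P A B"
proof -
  have fE: "finite E" using assms(1) by (simp add: matroid_rank_def)
  have AE: "A \<subseteq> E" "B \<subseteq> E" using assms(3,4) by (auto simp: mix_X_def)
  show ?thesis
  proof (cases "A = B")
    case True thus ?thesis using path1[OF assms(3)] by (intro exI) simp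
  next
    case nAB: False
    show ?thesis
    proof (cases "A \<subseteq> B \<or> B \<subseteq> A")
      case True
      hence "A \<subset> B \<or> B \<subset> A" using nAB by blast
      hence "mix_edge E r1 r2 A B" using assms(3,4) unfolding mix_edge_def by blast
      hence "mix_path E r1 r2 [A, B] A B" by (rule path2[OF nAB])
      thus ?thesis by (rule exI)
    next
      case False
      then obtain x y where x: "x \<in> A" "x \<notin> B" and y: "y \<in> B" "y \<notin> A" by blast
      show ?thesis
      proof (cases "A \<inter> B \<in> mix_X E r1 r2")
        case True
        have "A \<inter> B \<subset> A" "A \<inter> B \<subset> B" using x y by blast+
        hence "mix_edge E r1 r2 A (A \<inter> B)" "mix_edge E r1 r2 (A \<inter> B) B"
          using True assms(3,4) unfolding mix_edge_def by blast+
        moreover have "A \<noteq> A \<inter> B" "A \<inter> B \<noteq> B" using x y by auto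
        ultimately have "mix_path E r1 r2 [A, A \<inter> B, B] A B" using path3[OF nAB] by metis
        thus ?thesis by (rule exI)
      next
        case nI: False
        show ?thesis
        proof (cases "A \<union> B \<in> mix_X E r1 r2")
          case True
          have "A \<subset> A \<union> B" "B \<subset> A \<union> B" using x y by blast+
          hence "mix_edge E r1 r2 A (A \<union> B)" "mix_edge E r1 r2 (A \<union> B) B"
            using True assms(3,4) unfolding mix_edge_def by blast+
          moreover have "A \<noteq> A \<union> B" "A \<union> B \<noteq> B" using x y by auto
          ultimately have "mix_path E r1 r2 [A, A \<union> B, B] A B" using path3[OF nAB] by metis
          thus ?thesis by (rule exI)
        next
          case nU: False
          have fin: "finite ((A - B) \<union> (B - A))" by (rule finite_subset[OF _ fE]) (use AE in blast)
          have "{x, y} \<subseteq> (A - B) \<union> (B - A)" using x y by auto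
          hence "card {x, y} \<le> card ((A - B) \<union> (B - A))" by (rule card_mono[OF fin])
          moreover have "card {x, y} = 2" using x y by (auto simp: card_insert_if)
          ultimately have "card ((A - B) \<union> (B - A)) = 2" using assms(5) by linarith
          hence "mix_edge E r1 r2 A B" using nI nU assms(3,4) unfolding mix_edge_def by blast
          hence "mix_path E r1 r2 [A, B] A B" by (rule path2[OF nAB])
      thus ?thesis by (rule exI)
        qed
      qed
    qed
  qed
qed

end
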